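(* Let $1\le l\le s+1$ and let $\beta_1<\beta_2<\dots<\beta_l$ be indices in $\{0,\dots,s\}$. Define $$\mathcal{C}_{\beta_1\cdots\beta_l}=\{c_1+c_2+\dots+c_l:\ c_i\in\mathcal{I}_{\beta_i}\setminus\{0\},\ i=1,\dots,l\}\subseteq\mathcal{R},$$ on which $\langle\rho\rangle$ acts. Then $$N_{\langle\rho\rangle}(\mathcal{C}_{\beta_1\cdots\beta_l})=\frac{\prod_{i=1}^{l}(q^{d_{\beta_i}}-1)\cdot\gcd(1+t\alpha_{\beta_1},\dots,1+t\alpha_{\beta_l},n)}{tn}.$$
   Context: Standing setup: $q$ is a prime power, $n$ a positive integer with $\gcd(n,q)=1$, $\lambda\in\mathbb{F}_q^{*}$ has multiplicative order $t$ (so $t\mid q-1$). $\mathcal{R}=\mathbb{F}_q[x]/\langle x^n-\lambda\rangle$; vectors $(c_0,\dots,c_{n-1})\in\mathbb{F}_q^n$ are identified with $c_0+c_1x+\dots+c_{n-1}x^{n-1}\in\mathcal{R}$, and a $\lambda$-constacyclic code of length $n$ is an ideal of $\mathcal{R}$. Let $\zeta$ be a primitive $tn$-th root of unity in an extension $\mathbb{F}_{q^m}$ with $\zeta^n=\lambda$, so $x^n-\lambda=\prod_{i=0}^{n-1}(x-\zeta^{1+ti})$. The set $\mathcal{S}=\{1+ti:0\le i\le n-1\}$ (residues mod $tn$) is partitioned into the distinct $q$-cyclotomic cosets modulo $tn$, $C_{1+t\alpha_j}=\{(1+t\alpha_j)q^{h}\bmod tn: h\ge 0\}$, $j=0,\dots,s$,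 with $0=\alpha_0<\alpha_1<\dots<\alpha_s\le n-1$ and $d_j=|C_{1+t\alpha_j}|$. Let $m_j(x)=\prod_{h\in C_{1+t\alpha_j}}(x-\zeta^{h})$ (irreducible over $\mathbb{F}_q$), and let $\mathcal{I}_j$ be the ideal of $\mathcal{R}$ generated by $(x^n-\lambda)/m_j(x)$; this is an irreducible $\lambda$-constacyclic code of dimension $d_j$, said to correspond to the coset $C_{1+t\alpha_j}$, and $\mathcal{R}=\mathcal{I}_0\oplus\dots\oplus\mathcal{I}_s$. The cyclic shift $\rho:\mathcal{R}\to\mathcal{R}$ is $\rho(c(x))=xc(x)$, i.e. $(c_0,\dots,c_{n-1})\mapsto(\lambda c_{n-1},c_0,\dots,c_{n-2})$; $\langle\rho\rangle$ is the cyclic group it generates, of order $tn$. For a group $G$ acting on a finite set $X$, $N_G(X)$ denotes the number of $G$-orbits on $X$. *)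

theory Defs
  imports "HOL-Computational_Algebra.Polynomial"
begin

definition is_field_emb :: "('a::field \<Rightarrow> 'b::field) \<Rightarrow> bool" where
  "is_field_emb e \<longleftrightarrow> e 1 = 1 \<and> (\<forall>x y. e (x + y) = e x + e y) \<and> (\<forall>x y. e (x * y) = e x * e y)"

definition mult_order :: "'a::field \<Rightarrow> nat" where
  "mult_order a = (LEAST k. 0 < k \<and> a ^ k = 1)"

definition cyc_coset :: "nat \<Rightarrow> nat \<Rightarrow> nat \<Rightarrow> nat set" where
  "cyc_coset q m e = {(e * q ^ h) mod m | h. True}"

definition S_set :: "nat \<Rightarrow> nat \<Rightarrow> nat set" where
  "S_set t n = {(1 + t * i) mod (t * n) | i. i < n}"

text \<open>The alpha's: alpha_j is the smallest i with 1+ti in the j-th coset; these are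
  listed increasingly as alpha_0 = 0 < alpha_1 < ... < alpha_s.\<close>
definition alpha_set :: "nat \<Rightarrow> nat \<Rightarrow> nat \<Rightarrow> nat set" where
  "alpha_set q t n = {a. a < n \<and> (\<forall>b<a. (1 + t * b) mod (t * n) \<notin> cyc_coset q (t * n) (1 + t * a))}"

definition alpha :: "nat \<Rightarrow> nat \<Rightarrow> nat \<Rightarrow> nat \<Rightarrow> nat" where
  "alpha q t n j = sorted_list_of_set (alpha_set q t n) ! j"

text \<open>s = (number of cosets) - 1.\<close>
definition s_idx :: "nat \<Rightarrow> nat \<Rightarrow> nat \<Rightarrow> nat" where
  "s_idx q t n = card (alpha_set q t n) - 1"

definition d_dim :: "nat \<Rightarrow> nat \<Rightarrow> nat \<Rightarrow> nat \<Rightarrow> nat" where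
  "d_dim q t n j = card (cyc_coset q (t * n) (1 + t * alpha q t n j))"

definition m_poly :: "nat \<Rightarrow> nat \<Rightarrow> nat \<Rightarrow> 'b::field \<Rightarrow> nat \<Rightarrow> 'b poly" where
  "m_poly q t n \<zeta> j = (\<Prod>h\<in>cyc_coset q (t * n) (1 + t * alpha q t n j). [:- (\<zeta> ^ h), 1:])"

definition gen_poly :: "('a::field \<Rightarrow> 'b::field) \<Rightarrow> nat \<Rightarrow> nat \<Rightarrow> nat \<Rightarrow> 'a \<Rightarrow> 'b \<Rightarrow> nat \<Rightarrow> 'a poly" where
  "gen_poly e q t n lam \<zeta> j =
     (SOME g. map_poly e g = map_poly e (monom 1 n - [:lam:]) div m_poly q t n \<zeta> j)"

text \<open>The ambient ring R = F_q[x]/(x^n - lambda): elements are represented by polynomials of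
  degree < n (the reduced representatives).\<close>
definition R_mod :: "nat \<Rightarrow> 'a::field \<Rightarrow> 'a poly \<Rightarrow> 'a poly" where
  "R_mod n lam c = c mod (monom 1 n - [:lam:])"

definition irr_code :: "('a::field \<Rightarrow> 'b::field) \<Rightarrow> nat \<Rightarrow> nat \<Rightarrow> nat \<Rightarrow> 'a \<Rightarrow> 'b \<Rightarrow> nat \<Rightarrow> 'a poly set" where
  "irr_code e q t n lam \<zeta> j = {R_mod n lam (gen_poly e q t n lam \<zeta> j * a) | a. True}"

definition rho :: "nat \<Rightarrow> 'a::field \<Rightarrow> 'a poly \<Rightarrow> 'a poly" where
  "rho n lam c = R_mod n lam (monom 1 1 * c)"

definition num_orbits :: "('x \<Rightarrow> 'x) \<Rightarrow> 'x set \<Rightarrow> nat" where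
  "num_orbits f X = card ((\<lambda>x. {(f ^^ k) x | k. True}) ` X)"

end

theory Submission
  imports Defs "Jordan_Normal_Form.Char_Poly" "HOL-Algebra.Sylow" "HOL-Number_Theory.Number_Theory"
begin

hide_const (open) UnivPoly.up_ring.monom UnivPoly.up_ring.coeff





lemma ff_pow_card:
  fixes x :: "'a :: {field,finite}"
  shows "x ^ card (UNIV :: 'a set) = x"
proof (cases "x = 0")
  case False
  have "x * (\<Prod>y\<in>UNIV-{0}. x * y) = x * x ^ (card (UNIV :: 'a set) - 1) * \<Prod>(UNIV-{0})"
    by (simp add: prod.distrib mult_ac)
  also have "x * x ^ (card (UNIV :: 'a set) - 1) = x ^ Suc (card (UNIV :: 'a set) - 1)"
    by (subst power_Suc) auto
  also have "Suc (card (UNIV :: 'a set) - 1) = card (UNIV :: 'a set)"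
    using finite_UNIV_card_ge_0[where ?'a = 'a] by simp
  also have "(\<Prod>y\<in>UNIV-{0}. x * y) = (\<Prod>y\<in>UNIV-{0}. y)"
    by (rule prod.reindex_bij_witness[of _ "\<lambda>y. y / x" "\<lambda>y. x * y"]) (use False in auto)
  finally show ?thesis
    by simp
qed (use finite_UNIV_card_ge_0[where ?'a = 'a] in auto)

definition addG :: "'a::ab_group_add monoid" where
  "addG = \<lparr>carrier = UNIV, mult = (+), one = 0\<rparr>"

lemma addG_group: "group (addG :: 'a::ab_group_add monoid)"
  unfolding addG_def
  by (rule groupI) (auto simp: add.assoc intro: exI[of _ "- _"])

lemma prime_dvd_card_eq_CHAR:
  fixes r :: nat
  assumes r: "prime r" "r dvd card (UNIV :: 'a::{field,finite} set)"
  shows "r = CHAR('a)"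
proof -
  let ?G = "addG :: 'a monoid"
  interpret G: group ?G by (rule addG_group)
  have ord: "order ?G = r ^ 1 * (card (UNIV :: 'a set) div r)"
    using r by (simp add: order_def addG_def)
  obtain H where H: "subgroup H ?G" "card H = r"
    using sylow_thm[OF r(1) addG_group ord] by (auto simp: addG_def)
  have "card H \<ge> 2" using H r prime_ge_2_nat by auto
  hence "\<exists>x\<in>H. x \<noteq> 0"
    by (metis One_nat_def card.infinite card_le_Suc0_iff_eq not_less_eq_eq numeral_2_eq_2 zero_less_numeral zero_less_one_class.zero_le_one)
  then obtain x where x: "x \<in> H" "x \<noteq> 0" by blast
  have closed: "a \<in> H \<Longrightarrow> b \<in> H \<Longrightarrow> a + b \<in> H" for a b
    using subgroup.m_closed[OF H(1)] by (auto simp: addG_def)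
  have invx: "inv\<^bsub>?G\<^esub> x = - x"
    by (rule G.inv_equality) (auto simp: addG_def)
  have negx: "- x \<in> H"
    using subgroup.m_inv_closed[OF H(1) x(1)] invx by simp
  have fin: "finite H" using H(2) r prime_gt_0_nat card.infinite by fastforce
  have "(\<Sum>y\<in>H. y + x) = (\<Sum>y\<in>H. y)"
    by (rule sum.reindex_bij_witness[of _ "\<lambda>y. y + (- x)" "\<lambda>y. y + x"])
       (use closed negx x in \<open>auto\<close>, metis closed negx diff_conv_add_uminus)
  hence "of_nat (card H) * x = 0"
    by (simp add: sum.distrib)
  hence "of_nat r = (0::'a)" using x H by simp
  hence "CHAR('a) dvd r" by (simp add: of_nat_eq_0_iff_char_dvd)
  moreover have "CHAR('a) \<noteq> 1" by simp
  ultimately show ?thesis using r(1)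
    by (metis prime_nat_iff)
qed

lemma card_ff_prime_power:
  "\<exists>k. card (UNIV :: 'a::{field,finite} set) = CHAR('a) ^ k"
proof -
  have "\<And>m. m dvd card (UNIV :: 'a set) \<Longrightarrow> \<exists>k. m = CHAR('a) ^ k"
  proof -
    fix m :: nat
    show "m dvd card (UNIV :: 'a set) \<Longrightarrow> \<exists>k. m = CHAR('a) ^ k"
    proof (induction m rule: less_induct)
      case (less m)
      have m0: "m \<noteq> 0" using less.prems by (metis dvd_0_left_iff finite_UNIV_card_ge_0 finite_class.finite_UNIV not_less0)
      show ?case
      proof (cases "m = 1")
        case True then show ?thesis by (intro exI[of _ 0]) simp
      next
        case False
        then obtain r where r: "prime r" "r dvd m" using prime_factor_nat by blast
        then obtain m' where m': "m = r * m'" by blast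
        have "r = CHAR('a)"
          using prime_dvd_card_eq_CHAR[OF r(1)] r(2) less.prems dvd_trans by blast
        have "m' < m" using m' m0 r(1) prime_gt_1_nat by (simp add: m')
        moreover have "m' dvd card (UNIV :: 'a set)" using less.prems m' by (auto intro: dvd_mult_right)
        ultimately obtain k where "m' = CHAR('a) ^ k" using less.IH by blast
        then show ?thesis using m' \<open>r = CHAR('a)\<close> by (intro exI[of _ "Suc k"]) simp
      qed
    qed
  qed
  thus ?thesis by (meson dvd_refl)
qed







locale cset =
  fixes lam :: "'a::{field,finite}" and e :: "'a \<Rightarrow> 'b::{field,finite}" and \<zeta> :: 'b
    and q n t :: nat
  assumes q_def: "q = card (UNIV :: 'a set)"
    and n_pos: "0 < n"
    and coprime_nq: "coprime n q"
    and lam_nz: "lam \<noteq> 0"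
    and t_def: "t = mult_order lam"
    and emb: "is_field_emb e"
    and zeta_root: "\<zeta> ^ (t * n) = 1"
    and zeta_prim: "\<forall>k. 0 < k \<and> k < t * n \<longrightarrow> \<zeta> ^ k \<noteq> 1"
    and zeta_n: "\<zeta> ^ n = e lam"

sublocale cset \<subseteq> E: field_hom e
proof -
  have h: "e 1 = 1" "\<And>x y. e (x + y) = e x + e y" "\<And>x y. e (x * y) = e x * e y"
    using emb unfolding is_field_emb_def by auto
  have "e 0 = e (0 + 0)" by simp
  hence "e 0 + e 0 = e 0" using h(2)[of 0 0] by simp
  hence "e 0 = 0" by (metis add_cancel_right_right)
  thus "field_hom e" using h by unfold_locales auto
qed

sublocale cset \<subseteq> EP: map_poly_inj_idom_divide_hom e ..

context cset begin

abbreviation "N \<equiv> t * n"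

lemma q_ge2: "q \<ge> 2"
proof -
  have "card {0::'a, 1} \<le> card (UNIV :: 'a set)" by (rule card_mono) auto
  thus ?thesis using q_def by simp
qed

lemma lam_pow_q1: "lam ^ (q - 1) = 1"
proof -
  have "lam ^ q = lam" using ff_pow_card q_def by simp
  moreover have "lam ^ q = lam ^ (q - 1) * lam" using q_ge2
    by (cases q) (auto simp: power_Suc2)
  ultimately show ?thesis using lam_nz by simp
qed

lemma t_props: "0 < t" "lam ^ t = 1"
proof -
  have ex: "0 < q - 1 \<and> lam ^ (q - 1) = 1" using q_ge2 lam_pow_q1 by simp
  have "0 < t \<and> lam ^ t = 1" unfolding t_def mult_order_def by (rule LeastI[of "\<lambda>k. 0 < k \<and> lam ^ k = 1" "q - 1", OF ex])
  thus "0 < t" "lam ^ t = 1" by auto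
qed

lemma lam_pow_eq1: "lam ^ k = 1 \<longleftrightarrow> t dvd k"
proof
  assume k: "lam ^ k = 1"
  have "lam ^ (t * (k div t) + k mod t) = lam ^ (t * (k div t)) * lam ^ (k mod t)"
    by (rule power_add)
  hence "lam ^ k = lam ^ (t * (k div t)) * lam ^ (k mod t)" by simp
  also have "lam ^ (t * (k div t)) = 1" by (simp add: power_mult t_props)
  finally have "lam ^ (k mod t) = 1" using k by simp
  moreover have "k mod t < t" using t_props by simp
  ultimately have "\<not> (0 < k mod t)"
    using not_less_Least[of "k mod t" "\<lambda>k. 0 < k \<and> lam ^ k = 1"]
    unfolding t_def mult_order_def by auto
  thus "t dvd k" by auto
next
  assume "t dvd k" thus "lam ^ k = 1" by (auto simp: power_mult t_props)
qed

lemma t_dvd_q1: "t dvd q - 1" using lam_pow_eq1 lam_pow_q1 by simp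

lemma q_mod_t: "q mod t = 1 mod t"
proof -
  obtain k where k: "q - 1 = t * k" using t_dvd_q1 by blast
  have "q = t * k + 1" using q_ge2 k by simp
  then show ?thesis by (simp only: mod_mult_self4)
qed

lemma N_pos: "0 < N" using t_props n_pos by simp

lemma zeta_nz: "\<zeta> \<noteq> 0"
proof
  assume "\<zeta> = 0"
  hence "\<zeta> ^ N = 0" using N_pos by simp
  with zeta_root show False by simp
qed

lemma zeta_pow_eq1: "\<zeta> ^ k = 1 \<longleftrightarrow> N dvd k"
proof
  assume k: "\<zeta> ^ k = 1"
  have "\<zeta> ^ (N * (k div N) + k mod N) = \<zeta> ^ (N * (k div N)) * \<zeta> ^ (k mod N)"
    by (rule power_add)
  hence "\<zeta> ^ k = \<zeta> ^ (N * (k div N)) * \<zeta> ^ (k mod N)" by simp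
  also have "\<zeta> ^ (N * (k div N)) = (\<zeta> ^ N) ^ (k div N)" by (rule power_mult)
  also have "\<dots> = 1" by (simp only: zeta_root power_one)
  finally have "\<zeta> ^ (k mod N) = 1" using k by simp
  moreover have "k mod N < N" using N_pos by simp
  ultimately have "k mod N = 0" using zeta_prim by auto
  thus "N dvd k" by auto
next
  assume "N dvd k"
  then obtain j where j: "k = N * j" by blast
  have "\<zeta> ^ (N * j) = (\<zeta> ^ N) ^ j" by (rule power_mult)
  thus "\<zeta> ^ k = 1" using j by (simp only: zeta_root power_one)
qed

lemma zeta_pow_mod: "\<zeta> ^ (k mod N) = \<zeta> ^ k"
proof -
  have "\<zeta> ^ (N * (k div N) + k mod N) = \<zeta> ^ (N * (k div N)) * \<zeta> ^ (k mod N)"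
    by (rule power_add)
  hence "\<zeta> ^ k = \<zeta> ^ (N * (k div N)) * \<zeta> ^ (k mod N)" by simp
  also have "\<zeta> ^ (N * (k div N)) = (\<zeta> ^ N) ^ (k div N)" by (rule power_mult)
  also have "\<dots> = 1" by (simp only: zeta_root power_one)
  finally show ?thesis by simp
qed

lemma zeta_pow_inj: "a < N \<Longrightarrow> b < N \<Longrightarrow> \<zeta> ^ a = \<zeta> ^ b \<Longrightarrow> a = b"
proof -
  assume ab: "a < N" "b < N" "\<zeta> ^ a = \<zeta> ^ b"
  { fix a b assume ab: "a < N" "b < N" "\<zeta> ^ a = \<zeta> ^ b" "a \<le> b"
    have "\<zeta> ^ (a + (b - a)) = \<zeta> ^ a * \<zeta> ^ (b - a)" by (rule power_add)
    moreover have "a + (b - a) = b" using ab by simp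
    ultimately have "\<zeta> ^ b = \<zeta> ^ a * \<zeta> ^ (b - a)" by simp
    hence "\<zeta> ^ (b - a) = 1" using ab zeta_nz by simp
    hence "N dvd b - a" using zeta_pow_eq1 by simp
    moreover have "b - a < N" using ab by linarith
    ultimately have "b - a = 0" by (metis dvd_imp_le neq0_conv not_le)
    hence "a = b" using ab by linarith }
  thus ?thesis using ab by (metis nle_le)
qed

lemma coprime_qt: "coprime q t"
proof -
  have "coprime (Suc (q - 1)) (q - 1)" by (rule coprime_Suc_left_nat)
  hence c: "coprime q (q - 1)" using q_ge2 by simp
  obtain k where "q - 1 = t * k" using t_dvd_q1 by blast
  thus ?thesis using c by simp
qed

lemma coprime_qN: "coprime q N"
  using coprime_qt coprime_nq by (simp add: coprime_commute)

lemma CHAR_eq: "CHAR('b) = CHAR('a)"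
proof -
  have "\<And>m. (of_nat m :: 'b) = 0 \<longleftrightarrow> (of_nat m :: 'a) = 0"
  proof -
    fix m
    have "(of_nat m :: 'b) = e (of_nat m)" by (rule E.hom_of_nat[symmetric])
    thus "(of_nat m :: 'b) = 0 \<longleftrightarrow> (of_nat m :: 'a) = 0" by simp
  qed
  hence "\<And>m. CHAR('b) dvd m \<longleftrightarrow> CHAR('a) dvd m" by (simp add: of_nat_eq_0_iff_char_dvd)
  thus ?thesis by (meson dvd_antisym dvd_refl)
qed

lemma CHAR_b_prime: "prime CHAR('b)"
proof -
  have "CHAR('b) > 0" by (rule finite_imp_CHAR_pos) simp
  thus ?thesis using prime_CHAR_semidom by blast
qed

lemma frob_add: "(x + y :: 'b) ^ q = x ^ q + y ^ q"
proof -
  obtain k where "q = CHAR('a) ^ k" using card_ff_prime_power q_def by blast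
  hence "q = CHAR('b) ^ k" using CHAR_eq by simp
  thus ?thesis by (intro freshmans_dream' CHAR_b_prime)
qed

lemma fixed_in_range: "(y :: 'b) ^ q = y \<Longrightarrow> y \<in> range e"
proof -
  assume y: "y ^ q = y"
  let ?p = "monom (1::'b) q - [:0, 1:]"
  have dp: "degree ?p = q"
  proof -
    have "degree [:0, 1::'b:] < degree (monom (1::'b) q)" using q_ge2 by (simp add: degree_monom_eq)
    hence "degree (monom (1::'b) q + - [:0, 1::'b:]) = q"
      using degree_add_eq_left[of "- [:0, 1::'b:]" "monom (1::'b) q"] by (simp add: degree_monom_eq)
    thus ?thesis by (simp only: diff_conv_add_uminus)
  qed
  hence p0: "?p \<noteq> 0" using q_ge2 by auto
  have ea: "e a ^ q = e a" for a
  proof -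
    have "e a ^ q = e (a ^ q)" by (rule E.hom_power[symmetric])
    also have "a ^ q = a" using ff_pow_card q_def by simp
    finally show ?thesis .
  qed
  have sub: "range e \<union> {y} \<subseteq> {x. poly ?p x = 0}"
    using y ea by (auto simp: poly_monom)
  have "card (range e \<union> {y}) \<le> q"
    using card_mono[OF poly_roots_finite[OF p0] sub] card_poly_roots_bound[OF p0] dp by linarith
  moreover have "card (range e) = q" using q_def card_image[OF E.inj_f] by simp
  ultimately show ?thesis
  proof (rule_tac ccontr)
    assume "card (range e \<union> {y}) \<le> q" "card (range e) = q" "y \<notin> range e"
    moreover have "card (range e \<union> {y}) = Suc (card (range e))" using \<open>y \<notin> range e\<close> by simp
    ultimately show False by linarith
  qed
qed

end



context cset begin

abbreviation "C x \<equiv> cyc_coset q N x"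
definition "Sp = {x. x < N \<and> x mod t = 1 mod t}"
abbreviation "T \<equiv> totient N"

lemma qT: "q ^ T mod N = 1 mod N"
  using euler_theorem[OF coprime_qN] by (simp add: cong_def)

lemma qhT: "q ^ (h * T) mod N = 1 mod N"
proof -
  have "q ^ (h * T) = q ^ (T * h)" by (simp only: mult.commute)
  also have "\<dots> = (q ^ T) ^ h" by (rule power_mult)
  finally have "q ^ (h * T) = (q ^ T) ^ h" .
  hence "q ^ (h * T) mod N = ((q ^ T) mod N) ^ h mod N" by (simp add: power_mod)
  also have "\<dots> = (1 mod N) ^ h mod N" by (simp only: qT)
  also have "\<dots> = 1 mod N" by (simp add: power_mod)
  finally show ?thesis .
qed

lemma T_pos: "T > 0" using N_pos by simp

lemma coset_mem: "y \<in> C x \<longleftrightarrow> (\<exists>h. y = x * q ^ h mod N)"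
  unfolding cyc_coset_def by auto

lemma coset_lt: "y \<in> C x \<Longrightarrow> y < N"
  using N_pos by (auto simp: coset_mem)

lemma coset_self: "x mod N \<in> C x"
  unfolding coset_mem by (intro exI[of _ 0]) simp

lemma coset_finite: "finite (C x)"
  by (rule finite_subset[of _ "{..<N}"]) (auto dest: coset_lt)

lemma coset_mul: "y \<in> C x \<Longrightarrow> y * q ^ k mod N \<in> C x"
proof -
  assume "y \<in> C x"
  then obtain h where h: "y = x * q ^ h mod N" by (auto simp: coset_mem)
  have "y * q ^ k mod N = x * q ^ (h + k) mod N"
    unfolding h by (simp add: mod_mult_left_eq power_add mult.assoc)
  thus ?thesis unfolding coset_mem by blast
qed

lemma coset_mod: "C (x mod N) = C x"
  unfolding cyc_coset_def by (simp add: mod_mult_left_eq)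

lemma coset_back: "y \<in> C x \<Longrightarrow> x mod N \<in> C y"
proof -
  assume "y \<in> C x"
  then obtain h where h: "y = x * q ^ h mod N" by (auto simp: coset_mem)
  have "x * q ^ (h * T) mod N = x * (q ^ (h * T) mod N) mod N" by (rule mod_mult_right_eq[symmetric])
  also have "\<dots> = x * (1 mod N) mod N" by (simp only: qhT)
  also have "\<dots> = x mod N" by (simp only: mod_mult_right_eq mult_1_right)
  finally have "x mod N = x * q ^ (h * T) mod N" by simp
  also have "h * T = h + h * (T - 1)" using T_pos
    by (cases T) auto
  also have "x * q ^ (h + h * (T - 1)) mod N = y * q ^ (h * (T - 1)) mod N"
    unfolding h by (simp add: mod_mult_left_eq power_add mult.assoc)
  finally show ?thesis unfolding coset_mem by blast
qed

lemma coset_sub: "y \<in> C x \<Longrightarrow> C y \<subseteq> C x"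
proof
  fix z assume "y \<in> C x" "z \<in> C y"
  then obtain a where a: "z = y * q ^ a mod N" by (auto simp: coset_mem)
  show "z \<in> C x" unfolding a by (rule coset_mul) fact
qed

lemma coset_eq: "y \<in> C x \<Longrightarrow> C y = C x"
proof
  assume y: "y \<in> C x"
  show "C y \<subseteq> C x" using coset_sub[OF y] .
  show "C x \<subseteq> C y" using coset_sub[OF coset_back[OF y]] coset_mod by simp
qed

lemma coset_disj: "C x \<inter> C y \<noteq> {} \<Longrightarrow> C x = C y"
proof -
  assume "C x \<inter> C y \<noteq> {}"
  then obtain z where "z \<in> C x" "z \<in> C y" by blast
  thus ?thesis using coset_eq by metis
qed

lemma Sp_mem: "x \<in> Sp \<longleftrightarrow> x < N \<and> x mod t = 1 mod t" by (simp add: Sp_def)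

lemma coset_Sp: "x mod t = 1 mod t \<Longrightarrow> C x \<subseteq> Sp"
proof
  fix y assume x: "x mod t = 1 mod t" and "y \<in> C x"
  then obtain h where h: "y = x * q ^ h mod N" by (auto simp: coset_mem)
  have "y mod t = x * q ^ h mod t" unfolding h by (simp add: mod_mod_cancel)
  also have "[x * q ^ h = 1 * 1 ^ h] (mod t)"
    by (intro cong_mult cong_pow) (use x q_mod_t in \<open>auto simp: cong_def\<close>)
  hence "x * q ^ h mod t = 1 mod t" by (simp add: cong_def)
  finally show "y \<in> Sp" using coset_lt[OF \<open>y \<in> C x\<close>] by (simp add: Sp_mem)
qed

lemma Sp_finite: "finite Sp" unfolding Sp_def by auto

lemma mulq_inj: "inj_on (\<lambda>h. h * q mod N) Sp"
proof (rule inj_onI)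
  fix a b assume ab: "a \<in> Sp" "b \<in> Sp" "a * q mod N = b * q mod N"
  hence "[a * q = b * q] (mod N)" by (simp add: cong_def)
  hence "[a = b] (mod N)" using cong_mult_rcancel_nat[OF coprime_qN] by simp
  thus "a = b" using ab by (simp add: cong_def Sp_mem)
qed

lemma mulq_Sp: "h \<in> Sp \<Longrightarrow> h * q mod N \<in> Sp"
proof -
  assume h: "h \<in> Sp"
  have "h * q mod N \<in> C h"
    using coset_mul[OF coset_self[of h], of 1] h by (simp add: Sp_mem)
  moreover have "C h \<subseteq> Sp" using h by (intro coset_Sp) (simp add: Sp_mem)
  ultimately show ?thesis by blast
qed

lemma mulq_back: "h \<in> Sp \<Longrightarrow> h * q mod N \<in> C x \<Longrightarrow> h \<in> C x"
proof -
  assume h: "h \<in> Sp" "h * q mod N \<in> C x"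
  have hh: "h mod N = h" using h by (simp add: Sp_mem)
  have "h * q mod N \<in> C h"
    using coset_mul[OF coset_self[of h], of 1] hh by simp
  hence "C (h * q mod N) = C h" by (rule coset_eq)
  moreover have "C (h * q mod N) = C x" using h(2) by (rule coset_eq)
  ultimately show ?thesis using coset_self[of h] hh by simp
qed

lemma mulq_bij: "bij_betw (\<lambda>h. h * q mod N) (Sp - C x) (Sp - C x)"
proof -
  have inj: "inj_on (\<lambda>h. h * q mod N) (Sp - C x)" using mulq_inj by (rule inj_on_subset) auto
  have "(\<lambda>h. h * q mod N) ` (Sp - C x) \<subseteq> Sp - C x"
  proof
    fix y assume "y \<in> (\<lambda>h. h * q mod N) ` (Sp - C x)"
    then obtain h where "h \<in> Sp" "h \<notin> C x" "y = h * q mod N" by blast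
    thus "y \<in> Sp - C x" using mulq_Sp mulq_back by blast
  qed
  hence "(\<lambda>h. h * q mod N) ` (Sp - C x) = Sp - C x"
    using endo_inj_surj[OF _ _ inj] Sp_finite by blast
  thus ?thesis using inj by (simp add: bij_betw_def)
qed

lemma Sp_image: "Sp = (\<lambda>i. (1 + t * i) mod N) ` {..<n}"
proof
  show "(\<lambda>i. (1 + t * i) mod N) ` {..<n} \<subseteq> Sp"
  proof
    fix x assume "x \<in> (\<lambda>i. (1 + t * i) mod N) ` {..<n}"
    then obtain i where x: "x = (1 + t * i) mod N" by blast
    have "x mod t = (1 + t * i) mod t" unfolding x by (simp add: mod_mod_cancel)
    also have "\<dots> = 1 mod t" by (rule mod_mult_self2)
    finally show "x \<in> Sp" using N_pos x by (simp add: Sp_mem)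
  qed
next
  show "Sp \<subseteq> (\<lambda>i. (1 + t * i) mod N) ` {..<n}"
  proof
    fix x assume "x \<in> Sp"
    hence x: "x < N" "x mod t = 1 mod t" by (auto simp: Sp_mem)
    show "x \<in> (\<lambda>i. (1 + t * i) mod N) ` {..<n}"
    proof (cases "x = 0")
      case True
      hence "1 mod t = 0" using x(2) by simp
      hence "t dvd 1" by (simp add: dvd_eq_mod_eq_0)
      hence "t = 1" by simp
      hence "x = (1 + t * (n - 1)) mod N" using True n_pos by simp
      moreover have "n - 1 < n" using n_pos by simp
      ultimately show ?thesis by blast
    next
      case False
      have "t dvd x - 1" using mod_eq_dvd_iff_nat[of 1 x t] x(2) False by simp
      then obtain i where i: "x - 1 = t * i" by blast
      have "x = 1 + t * i" using i False by simp
      hence "t * i < t * n" using x(1) by linarith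
      hence "i < n" by (meson mult_less_cancel1)
      moreover have "x = (1 + t * i) mod N" using \<open>x = 1 + t * i\<close> x(1) by simp
      ultimately show ?thesis by blast
    qed
  qed
qed

lemma Sp_inj: "inj_on (\<lambda>i. (1 + t * i) mod N) {..<n}"
proof -
  { fix i j assume ij: "i < n" "j < n" "(1 + t * i) mod N = (1 + t * j) mod N" "i \<le> j"
    have "N dvd (1 + t * j) - (1 + t * i)" using ij mod_eq_dvd_iff_nat[of "1 + t * i" "1 + t * j" N]
      by simp
    hence "t * n dvd t * (j - i)" by (simp add: diff_mult_distrib2)
    hence "n dvd j - i" using t_props by simp
    moreover have "j - i < n" using ij by linarith
    ultimately have "j - i = 0" by (metis dvd_imp_le neq0_conv not_le)
    hence "i = j" using ij by simp }
  note * = this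
  show ?thesis
  proof (rule inj_onI)
    fix i j assume "i \<in> {..<n}" "j \<in> {..<n}" "(1 + t * i) mod N = (1 + t * j) mod N"
    thus "i = j" using *[of i j] *[of j i] by (cases "i \<le> j") auto
  qed
qed

lemma card_Sp: "card Sp = n"
  using card_image[OF Sp_inj] Sp_image by simp

lemma S_set_eq: "S_set t n = Sp"
  unfolding S_set_def Sp_image by auto

lemma root_pow: "h \<in> Sp \<Longrightarrow> (\<zeta> ^ h) ^ n = e lam"
proof -
  assume h: "h \<in> Sp"
  have "(\<zeta> ^ h) ^ n = \<zeta> ^ (h * n)" by (rule power_mult[symmetric])
  also have "\<dots> = \<zeta> ^ (h * n mod N)" by (rule zeta_pow_mod[symmetric])
  also have "h * n mod N = (h mod t) * n" by (rule mod_mult_mult2)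
  also have "\<dots> = (1 mod t) * n" using h by (simp add: Sp_mem)
  also have "\<dots> = (1 * n) mod N" by (rule mod_mult_mult2[symmetric])
  also have "\<zeta> ^ \<dots> = \<zeta> ^ (1 * n)" by (rule zeta_pow_mod)
  also have "\<dots> = e lam" by (simp add: zeta_n)
  finally show ?thesis .
qed

end



context cset begin

abbreviation "A \<equiv> alpha_set q t n"

lemma A_sub: "A \<subseteq> {..<n}" unfolding alpha_set_def by auto
lemma A_fin: "finite A" using A_sub finite_subset by blast
lemma A_0: "0 \<in> A" unfolding alpha_set_def using n_pos by auto
lemma card_A_pos: "card A > 0" using A_fin A_0 card_gt_0_iff by blast

lemma s_idx_iff: "j \<le> s_idx q t n \<longleftrightarrow> j < card A"
  unfolding s_idx_def using card_A_pos by linarith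

lemma alpha_in: "j < card A \<Longrightarrow> alpha q t n j \<in> A"
  unfolding alpha_def using A_fin
  by (metis nth_mem set_sorted_list_of_set length_sorted_list_of_set)

lemma alpha_inj: "j1 < card A \<Longrightarrow> j2 < card A \<Longrightarrow> alpha q t n j1 = alpha q t n j2 \<Longrightarrow> j1 = j2"
  unfolding alpha_def using A_fin
  by (metis distinct_sorted_list_of_set nth_eq_iff_index_eq length_sorted_list_of_set)

abbreviation "Cj j \<equiv> C (1 + t * alpha q t n j)"

lemma Cj_Sp: "Cj j \<subseteq> Sp"
  by (rule coset_Sp) (rule mod_mult_self2)

lemma Cj_nonempty: "Cj j \<noteq> {}" using coset_self by blast

lemma A_disj:
  assumes "a \<in> A" "b \<in> A" "a < b"
  shows "C (1 + t * a) \<inter> C (1 + t * b) = {}"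
proof (rule ccontr)
  assume "C (1 + t * a) \<inter> C (1 + t * b) \<noteq> {}"
  hence "C (1 + t * a) = C (1 + t * b)" by (rule coset_disj)
  hence "(1 + t * a) mod N \<in> C (1 + t * b)" using coset_self[of "1 + t * a"] by simp
  moreover have "(1 + t * a) mod N \<notin> C (1 + t * b)"
    using assms(2,3) unfolding alpha_set_def by auto
  ultimately show False by blast
qed

lemma Cj_disj:
  assumes "j1 < card A" "j2 < card A" "j1 \<noteq> j2"
  shows "Cj j1 \<inter> Cj j2 = {}"
proof -
  have ne: "alpha q t n j1 \<noteq> alpha q t n j2" using alpha_inj assms by blast
  show ?thesis
  proof (cases "alpha q t n j1 < alpha q t n j2")
    case True thus ?thesis using A_disj alpha_in assms by blast
  next
    case False
    hence "alpha q t n j2 < alpha q t n j1" using ne by linarith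
    thus ?thesis using A_disj alpha_in assms by blast
  qed
qed

lemma d_dim_eq: "d_dim q t n j = card (Cj j)" unfolding d_dim_def by simp

lemma d_dim_pos: "d_dim q t n j > 0"
  unfolding d_dim_eq using Cj_nonempty coset_finite card_gt_0_iff by blast

abbreviation "f \<equiv> monom 1 n - [:lam:]"
abbreviation "F \<equiv> map_poly e f"
definition lin :: "nat set \<Rightarrow> 'b poly" where "lin B = (\<Prod>h\<in>B. [:- (\<zeta> ^ h), 1:])"

lemma F_eq: "F = monom 1 n - [:e lam:]"
proof -
  have "map_poly e [:lam:] = [:e lam:]" by (simp add: E.map_poly_pCons_hom)
  thus ?thesis by (simp add: EP.hom_minus)
qed

lemma deg_f: "degree f = n"
proof -
  have "degree (monom (1::'a) n + - [:lam:]) = n"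
    using degree_add_eq_left[of "- [:lam:]" "monom (1::'a) n"] n_pos by (simp add: degree_monom_eq)
  thus ?thesis by (simp only: diff_conv_add_uminus)
qed

lemma f_nz: "f \<noteq> 0" using deg_f n_pos by auto

lemma deg_F: "degree F = n" using deg_f by simp

lemma coeff_F_n: "coeff F n = 1"
proof -
  obtain m where "n = Suc m" using n_pos by (cases n) auto
  thus ?thesis by (simp add: F_eq)
qed

lemma poly_F_root: "h \<in> Sp \<Longrightarrow> poly F (\<zeta> ^ h) = 0"
  using root_pow by (simp add: F_eq poly_monom)

lemma lin_nz: "lin B \<noteq> 0"
  unfolding lin_def by (cases "finite B") auto

lemma deg_lin: "finite B \<Longrightarrow> degree (lin B) = card B"
  unfolding lin_def by (subst degree_prod_eq_sum_degree) auto

lemma lc_lin: "lead_coeff (lin B) = 1"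
  unfolding lin_def lead_coeff_prod by simp

lemma poly_lin_root: "finite B \<Longrightarrow> h \<in> B \<Longrightarrow> poly (lin B) (\<zeta> ^ h) = 0"
  unfolding lin_def poly_prod by (rule prod_zero) auto

lemma card_roots: "card ((\<lambda>h. \<zeta> ^ h) ` Sp) = n"
proof -
  have "inj_on (\<lambda>h. \<zeta> ^ h) Sp" by (rule inj_onI) (auto simp: Sp_mem intro: zeta_pow_inj)
  thus ?thesis using card_image card_Sp by metis
qed

lemma vanish_Sp:
  assumes "degree (p :: 'b poly) < n" "\<And>h. h \<in> Sp \<Longrightarrow> poly p (\<zeta> ^ h) = 0"
  shows "p = 0"
proof (rule ccontr)
  assume p0: "p \<noteq> 0"
  have "(\<lambda>h. \<zeta> ^ h) ` Sp \<subseteq> {x. poly p x = 0}" using assms(2) by auto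
  hence "card ((\<lambda>h. \<zeta> ^ h) ` Sp) \<le> card {x. poly p x = 0}"
    by (intro card_mono poly_roots_finite p0)
  also have "\<dots> \<le> degree p" by (rule card_poly_roots_bound[OF p0])
  finally show False using card_roots assms(1) by linarith
qed

lemma F_prod: "F = lin Sp"
proof -
  let ?D = "F - lin Sp"
  have dl: "degree (lin Sp) = n" using deg_lin Sp_finite card_Sp by simp
  have cl: "coeff (lin Sp) n = 1" using lc_lin[of Sp] dl by simp
  have "\<forall>i>n - 1. coeff ?D i = 0"
  proof (intro allI impI)
    fix i assume "i > n - 1"
    hence "i = n \<or> i > n" by linarith
    thus "coeff ?D i = 0"
    proof
      assume "i = n" thus ?thesis using cl coeff_F_n by simp
    next
      assume "i > n" thus ?thesis using deg_F dl by (simp add: coeff_eq_0)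
    qed
  qed
  hence "degree ?D \<le> n - 1" by (rule degree_le)
  hence "degree ?D < n" using n_pos by linarith
  moreover have "\<And>h. h \<in> Sp \<Longrightarrow> poly ?D (\<zeta> ^ h) = 0"
    using poly_F_root poly_lin_root Sp_finite by simp
  ultimately have "?D = 0" by (rule vanish_Sp)
  thus ?thesis by simp
qed

lemma lin_split: "B \<subseteq> Sp \<Longrightarrow> lin B * lin (Sp - B) = F"
  unfolding F_prod lin_def using Sp_finite
  by (metis mult.commute prod.subset_diff)

lemma F_div: "B \<subseteq> Sp \<Longrightarrow> F div lin B = lin (Sp - B)"
  using lin_split[of B] lin_nz[of B] by (metis nonzero_mult_div_cancel_left)

lemma m_poly_eq: "m_poly q t n \<zeta> j = lin (Cj j)"
  unfolding m_poly_def lin_def by simp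

end



definition Pd :: "nat \<Rightarrow> 'a::zero poly set" where "Pd d = {p. p = 0 \<or> degree p < d}"

lemma card_Pd: "card (Pd d :: 'a::{zero,finite} poly set) = card (UNIV :: 'a set) ^ d"
proof (induction d)
  case 0
  have "Pd 0 = {0 :: 'a poly}" unfolding Pd_def by auto
  thus ?case by simp
next
  case (Suc d)
  have eq: "Pd (Suc d) = (\<lambda>(a, p). pCons a p) ` (UNIV \<times> (Pd d :: 'a poly set))"
  proof
    show "Pd (Suc d) \<subseteq> (\<lambda>(a, p). pCons a p) ` (UNIV \<times> (Pd d :: 'a poly set))"
    proof
      fix r :: "'a poly" assume r: "r \<in> Pd (Suc d)"
      obtain a p where rp: "r = pCons a p" by (cases r) auto
      have "p \<in> Pd d" using r unfolding rp Pd_def by (auto split: if_splits)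
      thus "r \<in> (\<lambda>(a, p). pCons a p) ` (UNIV \<times> Pd d)" using rp by auto
    qed
    show "(\<lambda>(a, p). pCons a p) ` (UNIV \<times> (Pd d :: 'a poly set)) \<subseteq> Pd (Suc d)"
      unfolding Pd_def by (auto split: if_splits)
  qed
  have inj: "inj_on (\<lambda>(a, p). pCons a p) (UNIV \<times> (Pd d :: 'a poly set))"
    by (rule inj_onI) auto
  show ?case unfolding eq card_image[OF inj] card_cartesian_product Suc.IH by simp
qed

lemma Pd_pos: "d > 0 \<Longrightarrow> Pd d = {p. degree p < d}"
  unfolding Pd_def by auto

context cset begin

lemma lin_frob_fixed:
  assumes B: "bij_betw (\<lambda>h. h * q mod N) B B"
  shows "coeff (lin B) i \<in> range e"
proof -
  define \<phi> where "\<phi> = (\<lambda>y::'b. y ^ q)"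
  interpret Fr: comm_ring_hom \<phi>
    by unfold_locales (use q_ge2 in \<open>auto simp: \<phi>_def frob_add power_mult_distrib\<close>)
  interpret FP: map_poly_comm_ring_hom \<phi> ..
  have lin1: "map_poly \<phi> [:- (\<zeta> ^ h), 1:] = [:- (\<zeta> ^ (h * q mod N)), 1:]" for h
  proof -
    have "\<phi> (- (\<zeta> ^ h)) = - \<phi> (\<zeta> ^ h)" by (rule Fr.hom_uminus)
    hence "\<phi> (- (\<zeta> ^ h)) = - ((\<zeta> ^ h) ^ q)" by (simp add: \<phi>_def)
    also have "(\<zeta> ^ h) ^ q = \<zeta> ^ (h * q)" by (rule power_mult[symmetric])
    also have "\<dots> = \<zeta> ^ (h * q mod N)" by (rule zeta_pow_mod[symmetric])
    finally show ?thesis by (simp add: Fr.map_poly_pCons_hom)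
  qed
  have "map_poly \<phi> (lin B) = (\<Prod>h\<in>B. map_poly \<phi> [:- (\<zeta> ^ h), 1:])"
    unfolding lin_def by (rule FP.hom_prod)
  also have "\<dots> = (\<Prod>h\<in>B. [:- (\<zeta> ^ (h * q mod N)), 1:])" by (simp only: lin1)
  also have "\<dots> = lin B" unfolding lin_def
    by (rule prod.reindex_bij_betw[OF B, of "\<lambda>h. [:- (\<zeta> ^ h), 1:]"])
  finally have "map_poly \<phi> (lin B) = lin B" .
  hence "coeff (map_poly \<phi> (lin B)) i = coeff (lin B) i" by simp
  moreover have "coeff (map_poly \<phi> (lin B)) i = \<phi> (coeff (lin B) i)"
    by (rule coeff_map_poly) (use q_ge2 in \<open>simp add: \<phi>_def\<close>)
  ultimately have "(coeff (lin B) i) ^ q = coeff (lin B) i" by (simp add: \<phi>_def)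
  thus ?thesis by (rule fixed_in_range)
qed

lemma lin_pullback:
  assumes B: "bij_betw (\<lambda>h. h * q mod N) B B"
  shows "\<exists>g. map_poly e g = lin B"
proof
  have i0: "inv_into UNIV e 0 = 0" using E.inv_f_f[of 0] by simp
  show "map_poly e (map_poly (inv_into UNIV e) (lin B)) = lin B"
  proof (rule poly_eqI)
    fix i
    show "coeff (map_poly e (map_poly (inv_into UNIV e) (lin B))) i = coeff (lin B) i"
      using lin_frob_fixed[OF B, of i] i0 by (simp add: coeff_map_poly f_inv_into_f)
  qed
qed

abbreviation "G j \<equiv> gen_poly e q t n lam \<zeta> j"

lemma G_map: "map_poly e (G j) = lin (Sp - Cj j)"
proof -
  have ex: "\<exists>g. map_poly e g = lin (Sp - Cj j)" by (rule lin_pullback[OF mulq_bij])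
  have rhs: "map_poly e (monom 1 n - [:lam:]) div m_poly q t n \<zeta> j = lin (Sp - Cj j)"
    using F_div[OF Cj_Sp] m_poly_eq by simp
  show ?thesis unfolding gen_poly_def rhs using someI_ex[OF ex] .
qed

lemma G_nz: "G j \<noteq> 0" using G_map lin_nz by (metis map_poly_0)

abbreviation "M j \<equiv> f div G j"

lemma M_map: "map_poly e (M j) = lin (Cj j)"
proof -
  have "map_poly e (M j) = F div lin (Sp - Cj j)" by (simp add: E.map_poly_div G_map)
  also have "\<dots> = lin (Cj j)" using lin_split[OF Cj_Sp, of j] lin_nz
    by (metis nonzero_mult_div_cancel_right)
  finally show ?thesis .
qed

lemma G_dvd: "G j dvd f"
proof -
  have "map_poly e (G j) dvd F" using G_map lin_split[OF Cj_Sp, of j] by (metis dvd_triv_right)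
  thus ?thesis by (rule E.dvd_map_poly_hom_imp_dvd)
qed

lemma GM: "G j * M j = f" using G_dvd by simp

lemma deg_M: "degree (M j) = d_dim q t n j"
proof -
  have "degree (M j) = degree (map_poly e (M j))" by simp
  also have "\<dots> = card (Cj j)" using M_map deg_lin coset_finite by simp
  finally show ?thesis by (simp add: d_dim_eq)
qed

abbreviation "I j \<equiv> irr_code e q t n lam \<zeta> j"

lemma I_eq: "I j = (\<lambda>r. G j * r) ` Pd (d_dim q t n j)"
proof -
  have "G j * a mod f = G j * (a mod M j)" for a
    by (metis GM mod_mult_mult1)
  hence I1: "I j = {G j * (a mod M j) | a. True}"
    unfolding irr_code_def R_mod_def by simp
  show ?thesis
  proof
    show "I j \<subseteq> (\<lambda>r. G j * r) ` Pd (d_dim q t n j)"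
    proof
      fix c assume "c \<in> I j"
      then obtain a where a: "c = G j * (a mod M j)" using I1 by blast
      have "a mod M j \<in> Pd (d_dim q t n j)"
        unfolding Pd_def using degree_mod_less[of "M j" a] deg_M
        by (metis (mono_tags) G_dvd GM f_nz mem_Collect_eq mult_zero_right)
      thus "c \<in> (\<lambda>r. G j * r) ` Pd (d_dim q t n j)" using a by blast
    qed
    show "(\<lambda>r. G j * r) ` Pd (d_dim q t n j) \<subseteq> I j"
    proof
      fix c assume "c \<in> (\<lambda>r. G j * r) ` Pd (d_dim q t n j)"
      then obtain r where r: "c = G j * r" "r \<in> Pd (d_dim q t n j)" by blast
      have "r mod M j = r"
      proof (cases "r = 0")
        case False
        hence "degree r < degree (M j)" using r(2) deg_M by (simp add: Pd_def)
        thus ?thesis by (rule mod_poly_less)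
      qed simp
      thus "c \<in> I j" using r I1 by (metis (mono_tags, lifting) mem_Collect_eq)
    qed
  qed
qed

lemma card_I: "card (I j) = q ^ d_dim q t n j"
proof -
  have "inj_on (\<lambda>r. G j * r) (Pd (d_dim q t n j))"
    using G_nz by (auto intro: inj_onI)
  thus ?thesis unfolding I_eq using card_image card_Pd q_def by metis
qed

end



context cset begin

definition ev :: "'a poly \<Rightarrow> nat \<Rightarrow> 'b" where "ev c h = poly (map_poly e c) (\<zeta> ^ h)"

lemma ev_mult: "ev (a * b) h = ev a h * ev b h" by (simp add: ev_def EP.hom_mult)
lemma ev_add: "ev (a + b) h = ev a h + ev b h" by (simp add: ev_def EP.hom_add)
lemma ev_diff: "ev (a - b) h = ev a h - ev b h" by (simp add: ev_def EP.hom_minus)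
lemma ev_sum: "ev (\<Sum>i\<in>K. c i) h = (\<Sum>i\<in>K. ev (c i) h)" by (simp add: ev_def EP.hom_sum poly_sum)
lemma ev_0: "ev 0 h = 0" by (simp add: ev_def)
lemma ev_x: "ev (monom 1 1) h = \<zeta> ^ h" by (simp add: ev_def poly_monom del: One_nat_def)

lemma ev_mod: "h \<in> Sp \<Longrightarrow> ev (c mod f) h = ev c h"
proof -
  assume h: "h \<in> Sp"
  let ?p = "map_poly e c"
  have "map_poly e (c mod f) = ?p mod F" by (rule E.map_poly_mod)
  moreover have "?p = ?p div F * F + ?p mod F" by (rule div_mult_mod_eq[symmetric])
  hence "poly ?p (\<zeta> ^ h) = poly (?p div F) (\<zeta> ^ h) * poly F (\<zeta> ^ h) + poly (?p mod F) (\<zeta> ^ h)"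
    by (metis poly_add poly_mult)
  ultimately show ?thesis using poly_F_root[OF h] by (simp add: ev_def)
qed

lemma deg_mod: "degree (c mod f) < n"
  using degree_mod_less[OF f_nz, of c] deg_f n_pos by auto

lemma eq_by_ev:
  assumes "degree u < n" "degree v < n" "\<And>h. h \<in> Sp \<Longrightarrow> ev u h = ev v h"
  shows "u = v"
proof -
  have "map_poly e (u - v) = 0"
  proof (rule vanish_Sp)
    show "degree (map_poly e (u - v)) < n" using assms(1,2) by (simp add: degree_diff_less)
    show "\<And>h. h \<in> Sp \<Longrightarrow> poly (map_poly e (u - v)) (\<zeta> ^ h) = 0"
      using assms(3) ev_diff by (simp add: ev_def)
  qed
  thus ?thesis by simp
qed

lemma I_deg: "c \<in> I j \<Longrightarrow> degree c < n"
  unfolding irr_code_def R_mod_def using deg_mod by auto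

lemma I_van: "c \<in> I j \<Longrightarrow> h \<in> Sp \<Longrightarrow> h \<notin> Cj j \<Longrightarrow> ev c h = 0"
proof -
  assume c: "c \<in> I j" and h: "h \<in> Sp" "h \<notin> Cj j"
  obtain a where a: "c = G j * a mod f" using c unfolding irr_code_def R_mod_def by blast
  have "ev (G j) h = poly (lin (Sp - Cj j)) (\<zeta> ^ h)" by (simp add: ev_def G_map)
  also have "\<dots> = 0" using h Sp_finite by (intro poly_lin_root) auto
  finally show ?thesis unfolding a ev_mod[OF h(1)] ev_mult by simp
qed

lemma I_zero: "0 \<in> I j"
  unfolding irr_code_def R_mod_def by (auto intro: exI[of _ 0])

lemma I_nz_ev: "c \<in> I j \<Longrightarrow> c \<noteq> 0 \<Longrightarrow> \<exists>h\<in>Cj j. ev c h \<noteq> 0"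
proof (rule ccontr)
  assume c: "c \<in> I j" "c \<noteq> 0" "\<not> (\<exists>h\<in>Cj j. ev c h \<noteq> 0)"
  have "c = 0"
  proof (rule eq_by_ev)
    show "degree c < n" using I_deg[OF c(1)] .
    show "degree (0::'a poly) < n" using n_pos by simp
    show "\<And>h. h \<in> Sp \<Longrightarrow> ev c h = ev 0 h" using c I_van ev_0 by metis
  qed
  thus False using c by simp
qed

abbreviation "\<rho> \<equiv> rho n lam"

lemma rho_eq: "\<rho> c = monom 1 1 * c mod f" unfolding rho_def R_mod_def by simp

lemma ev_rho: "h \<in> Sp \<Longrightarrow> ev (\<rho> c) h = \<zeta> ^ h * ev c h"
  unfolding rho_eq by (simp only: ev_mod ev_mult ev_x)

lemma deg_rho: "degree (\<rho> c) < n" unfolding rho_eq by (rule deg_mod)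

lemma ev_rho_pow: "h \<in> Sp \<Longrightarrow> ev ((\<rho> ^^ k) c) h = \<zeta> ^ (h * k) * ev c h"
  by (induction k) (simp_all add: ev_rho power_add mult.assoc)

lemma deg_rho_pow: "degree c < n \<Longrightarrow> degree ((\<rho> ^^ k) c) < n"
  by (cases k) (simp_all add: deg_rho)

lemma I_rho: "c \<in> I j \<Longrightarrow> \<rho> c \<in> I j"
proof -
  assume "c \<in> I j"
  then obtain a where a: "c = G j * a mod f" unfolding irr_code_def R_mod_def by blast
  have "\<rho> c = monom 1 1 * (G j * a) mod f" unfolding rho_eq a by (simp add: mod_mult_right_eq)
  also have "\<dots> = G j * (monom 1 1 * a) mod f" by (simp add: ac_simps)
  finally show ?thesis unfolding irr_code_def R_mod_def by blast
qed

lemma rho_nz: "degree c < n \<Longrightarrow> c \<noteq> 0 \<Longrightarrow> \<rho> c \<noteq> 0"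
proof
  assume c: "degree c < n" "c \<noteq> 0" "\<rho> c = 0"
  have "c = 0"
  proof (rule eq_by_ev)
    show "degree c < n" by fact
    show "degree (0::'a poly) < n" using n_pos by simp
    fix h assume h: "h \<in> Sp"
    have "\<zeta> ^ h * ev c h = 0" using ev_rho[OF h, of c] c(3) ev_0 by simp
    thus "ev c h = ev 0 h" using zeta_nz by (simp add: ev_0)
  qed
  thus False using c by simp
qed

lemma rho_pow_eq:
  assumes "degree c < n"
  shows "(\<rho> ^^ a) c = (\<rho> ^^ b) c \<longleftrightarrow> (\<forall>h\<in>Sp. ev c h \<noteq> 0 \<longrightarrow> \<zeta> ^ (h * a) = \<zeta> ^ (h * b))"
proof
  assume eq: "(\<rho> ^^ a) c = (\<rho> ^^ b) c"
  show "\<forall>h\<in>Sp. ev c h \<noteq> 0 \<longrightarrow> \<zeta> ^ (h * a) = \<zeta> ^ (h * b)"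
  proof (intro ballI impI)
    fix h assume h: "h \<in> Sp" "ev c h \<noteq> 0"
    have "\<zeta> ^ (h * a) * ev c h = \<zeta> ^ (h * b) * ev c h" using eq ev_rho_pow[OF h(1)] by metis
    thus "\<zeta> ^ (h * a) = \<zeta> ^ (h * b)" using h(2) by simp
  qed
next
  assume H: "\<forall>h\<in>Sp. ev c h \<noteq> 0 \<longrightarrow> \<zeta> ^ (h * a) = \<zeta> ^ (h * b)"
  show "(\<rho> ^^ a) c = (\<rho> ^^ b) c"
  proof (rule eq_by_ev)
    show "degree ((\<rho> ^^ a) c) < n" "degree ((\<rho> ^^ b) c) < n" using deg_rho_pow assms by auto
    fix h assume h: "h \<in> Sp"
    show "ev ((\<rho> ^^ a) c) h = ev ((\<rho> ^^ b) c) h"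
      unfolding ev_rho_pow[OF h] using H h by (cases "ev c h = 0") auto
  qed
qed

lemma zeta_eq_iff: "\<zeta> ^ x = \<zeta> ^ y \<longleftrightarrow> x mod N = y mod N"
proof
  assume "\<zeta> ^ x = \<zeta> ^ y"
  hence "\<zeta> ^ (x mod N) = \<zeta> ^ (y mod N)" by (simp add: zeta_pow_mod)
  thus "x mod N = y mod N" using N_pos by (intro zeta_pow_inj) auto
next
  assume "x mod N = y mod N"
  thus "\<zeta> ^ x = \<zeta> ^ y" by (metis zeta_pow_mod)
qed

lemma mul_mod_eq_iff: "a \<le> b \<Longrightarrow> (x * a mod N = x * b mod N) \<longleftrightarrow> N dvd x * (b - a)"
proof -
  assume "a \<le> b"
  hence "x * a \<le> x * b" by (rule mult_le_mono2)
  hence "(x * b mod N = x * a mod N) = (N dvd x * b - x * a)" by (rule mod_eq_dvd_iff_nat)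
  moreover have "(x * a mod N = x * b mod N) = (x * b mod N = x * a mod N)" by (rule eq_commute)
  ultimately have "(x * a mod N = x * b mod N) = (N dvd x * b - x * a)" by simp
  thus ?thesis by (simp add: diff_mult_distrib2)
qed

end



locale cset2 = cset lam e \<zeta> q n t
  for lam :: "'a::{field,finite}" and e :: "'a \<Rightarrow> 'b::{field,finite}" and \<zeta> :: 'b and q n t :: nat +
  fixes l :: nat and \<beta> :: "nat \<Rightarrow> nat"
  assumes l1: "1 \<le> l"
    and beta_mono: "\<forall>i j. 1 \<le> i \<and> i < j \<and> j \<le> l \<longrightarrow> \<beta> i < \<beta> j"
    and beta_range: "\<forall>i. 1 \<le> i \<and> i \<le> l \<longrightarrow> \<beta> i \<le> s_idx q t n"
begin

abbreviation "K \<equiv> {1..l}"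

lemma beta_lt: "i \<in> K \<Longrightarrow> \<beta> i < card A"
  using beta_range s_idx_iff by auto

lemma beta_ne: "i \<in> K \<Longrightarrow> j \<in> K \<Longrightarrow> i \<noteq> j \<Longrightarrow> \<beta> i \<noteq> \<beta> j"
proof -
  assume ij: "i \<in> K" "j \<in> K" "i \<noteq> j"
  show ?thesis
  proof (cases "i < j")
    case True
    have "1 \<le> i \<and> i < j \<and> j \<le> l" using ij True by auto
    hence "\<beta> i < \<beta> j" using beta_mono by blast
    thus ?thesis by simp
  next
    case False
    hence "j < i" using ij by linarith
    hence "1 \<le> j \<and> j < i \<and> i \<le> l" using ij by auto
    hence "\<beta> j < \<beta> i" using beta_mono by blast
    thus ?thesis by simp
  qed
qed

lemma C_beta_disj: "i \<in> K \<Longrightarrow> j \<in> K \<Longrightarrow> i \<noteq> j \<Longrightarrow> Cj (\<beta> i) \<inter> Cj (\<beta> j) = {}"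
  using Cj_disj beta_lt beta_ne by blast

definition "X = {(\<Sum>i=1..l. c i) | c. \<forall>i\<in>{1..l}. c i \<in> I (\<beta> i) - {0}}"
definition "PI = PiE K (\<lambda>i. I (\<beta> i) - {0})"
definition "\<Phi> c = (\<Sum>i\<in>K. c i)"

lemma X_eq: "X = \<Phi> ` PI"
proof
  show "X \<subseteq> \<Phi> ` PI"
  proof
    fix x assume "x \<in> X"
    then obtain c where c: "x = (\<Sum>i=1..l. c i)" "\<forall>i\<in>K. c i \<in> I (\<beta> i) - {0}"
      unfolding X_def by blast
    have "restrict c K \<in> PI" unfolding PI_def using c(2) by auto
    moreover have "\<Phi> (restrict c K) = x" unfolding \<Phi>_def c(1) by simp
    ultimately show "x \<in> \<Phi> ` PI" by blast
  qed
  show "\<Phi> ` PI \<subseteq> X" unfolding X_def PI_def \<Phi>_def by blast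
qed

lemma ev_Phi_in:
  assumes c: "\<forall>i\<in>K. c i \<in> I (\<beta> i)" and k: "k \<in> K" and h: "h \<in> Cj (\<beta> k)"
  shows "ev (\<Phi> c) h = ev (c k) h"
proof -
  have hS: "h \<in> Sp" using h Cj_Sp by blast
  have "ev (\<Phi> c) h = (\<Sum>i\<in>K. ev (c i) h)" unfolding \<Phi>_def by (rule ev_sum)
  also have "\<dots> = ev (c k) h + (\<Sum>i\<in>K - {k}. ev (c i) h)"
    using k by (simp add: sum.remove)
  also have "(\<Sum>i\<in>K - {k}. ev (c i) h) = 0"
  proof (rule sum.neutral, rule ballI)
    fix i assume i: "i \<in> K - {k}"
    have "h \<notin> Cj (\<beta> i)" using C_beta_disj[of i k] i k h by auto
    thus "ev (c i) h = 0" using I_van c i hS by blast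
  qed
  finally show ?thesis by simp
qed

lemma ev_Phi_out:
  assumes c: "\<forall>i\<in>K. c i \<in> I (\<beta> i)" and h: "h \<in> Sp" "\<forall>i\<in>K. h \<notin> Cj (\<beta> i)"
  shows "ev (\<Phi> c) h = 0"
  unfolding \<Phi>_def ev_sum using I_van c h by (intro sum.neutral) blast

lemma deg_Phi: "\<forall>i\<in>K. c i \<in> I (\<beta> i) \<Longrightarrow> degree (\<Phi> c) < n"
proof -
  assume c: "\<forall>i\<in>K. c i \<in> I (\<beta> i)"
  have "degree (c x) < n" if "x \<in> K" for x
  proof -
    have "c x \<in> I (\<beta> x)" using c that by blast
    thus ?thesis by (rule I_deg)
  qed
  thus ?thesis unfolding \<Phi>_def using n_pos by (intro degree_sum_less) auto
qed

lemma PI_I: "c \<in> PI \<Longrightarrow> \<forall>i\<in>K. c i \<in> I (\<beta> i)"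
  unfolding PI_def by auto

lemma Phi_inj: "inj_on \<Phi> PI"
proof (rule inj_onI)
  fix c c' assume cc: "c \<in> PI" "c' \<in> PI" "\<Phi> c = \<Phi> c'"
  show "c = c'"
  proof (rule PiE_ext[OF cc(1)[unfolded PI_def] cc(2)[unfolded PI_def]])
    fix k assume k: "k \<in> K"
    show "c k = c' k"
    proof (rule eq_by_ev)
      have ck: "c k \<in> I (\<beta> k)" "c' k \<in> I (\<beta> k)" using PI_I[OF cc(1)] PI_I[OF cc(2)] k by auto
      show "degree (c k) < n" "degree (c' k) < n" using ck I_deg by auto
      fix h assume h: "h \<in> Sp"
      show "ev (c k) h = ev (c' k) h"
      proof (cases "h \<in> Cj (\<beta> k)")
        case True
        thus ?thesis using ev_Phi_in[OF PI_I[OF cc(1)] k True] ev_Phi_in[OF PI_I[OF cc(2)] k True] cc(3)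
          by simp
      next
        case False
        hence "ev (c k) h = 0" "ev (c' k) h = 0" using I_van[OF ck(1) h] I_van[OF ck(2) h] by auto
        thus ?thesis by simp
      qed
    qed
  qed
qed

lemma card_I_nz: "card (I j - {0}) = q ^ d_dim q t n j - 1"
proof -
  have "card (I j) > 0" using card_I q_ge2 by simp
  hence "finite (I j)" by (simp add: card_gt_0_iff)
  thus ?thesis using card_I I_zero by (simp add: card_Diff_singleton)
qed

lemma card_X: "card X = (\<Prod>i=1..l. q ^ d_dim q t n (\<beta> i) - 1)"
proof -
  have "card X = card PI" unfolding X_eq using card_image[OF Phi_inj] .
  also have "\<dots> = (\<Prod>i\<in>K. card (I (\<beta> i) - {0}))" unfolding PI_def by (rule card_PiE) simp
  also have "\<dots> = (\<Prod>i=1..l. q ^ d_dim q t n (\<beta> i) - 1)" by (simp add: card_I_nz)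
  finally show ?thesis .
qed

lemma finite_X: "finite X"
proof -
  have "finite (I j)" for j
  proof -
    have "card (I j) > 0" using card_I q_ge2 by simp
    thus ?thesis by (simp add: card_gt_0_iff)
  qed
  hence "finite PI" unfolding PI_def by (intro finite_PiE) auto
  thus ?thesis unfolding X_eq by simp
qed

lemma X_deg: "x \<in> X \<Longrightarrow> degree x < n"
  unfolding X_eq using deg_Phi PI_I by auto

abbreviation "av i \<equiv> 1 + t * alpha q t n (\<beta> i)"

lemma crit1:
  assumes x: "x \<in> X"
  shows "(\<forall>h\<in>Sp. ev x h \<noteq> 0 \<longrightarrow> N dvd h * m) \<longleftrightarrow> (\<forall>i\<in>K. N dvd av i * m)"
proof -
  obtain c where c: "c \<in> PI" "x = \<Phi> c" using x X_eq by blast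
  have cI: "\<forall>i\<in>K. c i \<in> I (\<beta> i)" using PI_I[OF c(1)] .
  have key: "h \<in> Cj (\<beta> i) \<Longrightarrow> N dvd h * m \<longleftrightarrow> N dvd av i * m" for h i
  proof -
    assume "h \<in> Cj (\<beta> i)"
    then obtain u where u: "h = av i * q ^ u mod N" by (auto simp: coset_mem)
    have "h * m mod N = (av i * q ^ u) * m mod N" unfolding u by (rule mod_mult_left_eq)
    also have "(av i * q ^ u) * m = q ^ u * (av i * m)" by (simp only: mult.commute mult.left_commute mult.assoc)
    finally have "h * m mod N = q ^ u * (av i * m) mod N" .
    hence "N dvd h * m \<longleftrightarrow> N dvd q ^ u * (av i * m)" by (simp add: dvd_eq_mod_eq_0)
    also have "\<dots> \<longleftrightarrow> N dvd av i * m"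
    proof (rule coprime_dvd_mult_right_iff)
      have "coprime N q" using coprime_qN by (simp only: coprime_commute)
      thus "coprime N (q ^ u)" by simp
    qed
    finally show ?thesis .
  qed
  show ?thesis
  proof
    assume H: "\<forall>h\<in>Sp. ev x h \<noteq> 0 \<longrightarrow> N dvd h * m"
    show "\<forall>i\<in>K. N dvd av i * m"
    proof
      fix i assume i: "i \<in> K"
      have ci: "c i \<in> I (\<beta> i)" "c i \<noteq> 0" using c(1) i unfolding PI_def by auto
      obtain h where h: "h \<in> Cj (\<beta> i)" "ev (c i) h \<noteq> 0" using I_nz_ev[OF ci] by blast
      have "ev x h \<noteq> 0" using ev_Phi_in[OF cI i h(1)] h(2) c(2) by simp
      moreover have "h \<in> Sp" using h(1) Cj_Sp by blast
      ultimately have "N dvd h * m" using H by blast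
      thus "N dvd av i * m" using key[OF h(1)] by simp
    qed
  next
    assume H: "\<forall>i\<in>K. N dvd av i * m"
    show "\<forall>h\<in>Sp. ev x h \<noteq> 0 \<longrightarrow> N dvd h * m"
    proof (intro ballI impI)
      fix h assume h: "h \<in> Sp" "ev x h \<noteq> 0"
      have "\<exists>i\<in>K. h \<in> Cj (\<beta> i)"
      proof (rule ccontr)
        assume "\<not> (\<exists>i\<in>K. h \<in> Cj (\<beta> i))"
        hence "\<forall>i\<in>K. h \<notin> Cj (\<beta> i)" by simp
        hence "ev x h = 0" using ev_Phi_out[OF cI h(1)] c(2) by simp
        thus False using h(2) by simp
      qed
      then obtain i where "i \<in> K" "h \<in> Cj (\<beta> i)" by blast
      thus "N dvd h * m" using key H by blast
    qed
  qed
qed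

definition "g = Gcd ((\<lambda>i. 1 + t * alpha q t n (\<beta> i)) ` {1..l} \<union> {n})"
definition "Nn = N div g"

lemma g_dvd_n: "g dvd n" unfolding g_def by (rule Gcd_dvd) simp

lemma g_pos: "g > 0" using g_dvd_n n_pos by (cases "g = 0") auto

lemma g_dvd_N: "g dvd N" using g_dvd_n by (rule dvd_mult)

lemma N_eq: "N = Nn * g" unfolding Nn_def using g_dvd_N by simp

lemma Nn_pos: "Nn > 0" using N_eq N_pos by (cases "Nn = 0") auto

lemma coprime_av: "coprime (av i) t"
proof -
  have "gcd t (alpha q t n (\<beta> i) * t + 1) = gcd t 1" by (rule gcd_add_mult)
  hence "gcd t (alpha q t n (\<beta> i) * t + 1) = 1" by simp
  moreover have "alpha q t n (\<beta> i) * t + 1 = av i" by (simp only: add.commute mult.commute)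
  ultimately have "coprime t (av i)" by (simp only: coprime_iff_gcd_eq_1)
  thus ?thesis by (simp only: coprime_commute)
qed

lemma Gcd_eq: "Gcd (av ` K \<union> {N}) = g"
proof (rule dvd_antisym)
  show "g dvd Gcd (av ` K \<union> {N})"
  proof (rule Gcd_greatest)
    fix y assume "y \<in> av ` K \<union> {N}"
    thus "g dvd y"
    proof
      assume "y \<in> av ` K" thus "g dvd y" unfolding g_def by (intro Gcd_dvd) auto
    next
      assume "y \<in> {N}" thus "g dvd y" using g_dvd_n by auto
    qed
  qed
  show "Gcd (av ` K \<union> {N}) dvd g"
    unfolding g_def
  proof (rule Gcd_greatest)
    let ?d = "Gcd (av ` K \<union> {N})"
    fix y assume "y \<in> (\<lambda>i. 1 + t * alpha q t n (\<beta> i)) ` K \<union> {n}"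
    thus "?d dvd y"
    proof
      assume "y \<in> (\<lambda>i. 1 + t * alpha q t n (\<beta> i)) ` K" thus "?d dvd y" by (intro Gcd_dvd) auto
    next
      assume "y \<in> {n}"
      have "1 \<in> K" using l1 by simp
      hence "?d dvd av 1" by (intro Gcd_dvd) auto
      hence cop: "coprime ?d t" using coprime_av[of 1] by (rule coprime_divisors[OF _ dvd_refl])
      have "?d dvd t * n" by (intro Gcd_dvd) auto
      hence "?d dvd n" using coprime_dvd_mult_right_iff[OF cop] by blast
      thus "?d dvd y" using \<open>y \<in> {n}\<close> by simp
    qed
  qed
qed

lemma crit2: "(\<forall>i\<in>K. N dvd av i * m) \<longleftrightarrow> Nn dvd m"
proof -
  have e1: "(\<forall>y\<in>av ` K \<union> {N}. N dvd m * y) \<longleftrightarrow> (\<forall>i\<in>K. N dvd m * av i) \<and> N dvd m * N"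
    by simp
  have e2: "N dvd m * av i \<longleftrightarrow> N dvd av i * m" for i by (simp only: mult.commute)
  have "(\<forall>i\<in>K. N dvd av i * m) \<longleftrightarrow> (\<forall>y\<in>av ` K \<union> {N}. N dvd m * y)"
    unfolding e1 e2 by simp
  also have "\<dots> \<longleftrightarrow> N dvd Gcd ((*) m ` (av ` K \<union> {N}))" unfolding dvd_Gcd_iff by blast
  also have "Gcd ((*) m ` (av ` K \<union> {N})) = normalize (m * Gcd (av ` K \<union> {N}))" by (rule Gcd_mult)
  also have "\<dots> = m * g" unfolding Gcd_eq by simp
  also have "N dvd m * g \<longleftrightarrow> Nn dvd m" unfolding N_eq using g_pos by simp
  finally show ?thesis .
qed

lemma rho_per:
  assumes x: "x \<in> X" and ab: "a \<le> b"
  shows "(\<rho> ^^ a) x = (\<rho> ^^ b) x \<longleftrightarrow> Nn dvd b - a"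
proof -
  have "(\<rho> ^^ a) x = (\<rho> ^^ b) x \<longleftrightarrow> (\<forall>h\<in>Sp. ev x h \<noteq> 0 \<longrightarrow> \<zeta> ^ (h * a) = \<zeta> ^ (h * b))"
    by (rule rho_pow_eq[OF X_deg[OF x]])
  also have "\<dots> \<longleftrightarrow> (\<forall>h\<in>Sp. ev x h \<noteq> 0 \<longrightarrow> N dvd h * (b - a))"
    by (simp add: zeta_eq_iff mul_mod_eq_iff[OF ab])
  also have "\<dots> \<longleftrightarrow> Nn dvd b - a" using crit1[OF x] crit2 by simp
  finally show ?thesis .
qed

lemma rho_X: "x \<in> X \<Longrightarrow> \<rho> x \<in> X"
proof -
  assume "x \<in> X"
  then obtain c where c: "c \<in> PI" "x = \<Phi> c" using X_eq by blast
  have cI: "\<forall>i\<in>K. c i \<in> I (\<beta> i)" using PI_I[OF c(1)] .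
  let ?c = "\<lambda>i\<in>K. \<rho> (c i)"
  have "?c \<in> PI" unfolding PI_def
  proof (rule PiE_I)
    fix i assume i: "i \<in> K"
    have "c i \<in> I (\<beta> i)" "c i \<noteq> 0" using c(1) i unfolding PI_def by auto
    thus "?c i \<in> I (\<beta> i) - {0}" using i I_rho rho_nz I_deg by auto
  qed auto
  moreover have "\<rho> x = \<Phi> ?c"
  proof (rule eq_by_ev)
    show "degree (\<rho> x) < n" by (rule deg_rho)
    show "degree (\<Phi> ?c) < n" by (rule deg_Phi) (use cI I_rho in auto)
    fix h assume h: "h \<in> Sp"
    show "ev (\<rho> x) h = ev (\<Phi> ?c) h"
      unfolding ev_rho[OF h] c(2) \<Phi>_def ev_sum by (simp add: ev_rho[OF h] sum_distrib_left)
  qed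
  ultimately show ?thesis unfolding X_eq by blast
qed

lemma rho_pow_X: "x \<in> X \<Longrightarrow> (\<rho> ^^ k) x \<in> X"
  by (induction k) (auto intro: rho_X)

definition "orb x = {(\<rho> ^^ k) x | k. True}"

lemma orb_eq_img: "x \<in> X \<Longrightarrow> orb x = (\<lambda>k. (\<rho> ^^ k) x) ` {..<Nn}"
proof
  assume x: "x \<in> X"
  show "orb x \<subseteq> (\<lambda>k. (\<rho> ^^ k) x) ` {..<Nn}"
  proof
    fix y assume "y \<in> orb x"
    then obtain k where k: "y = (\<rho> ^^ k) x" unfolding orb_def by blast
    have "(\<rho> ^^ (k mod Nn)) x = (\<rho> ^^ k) x"
      using rho_per[OF x, of "k mod Nn" k] by (simp add: minus_mod_eq_mult_div)
    moreover have "k mod Nn < Nn" using Nn_pos by simp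
    ultimately show "y \<in> (\<lambda>k. (\<rho> ^^ k) x) ` {..<Nn}" using k by (metis image_eqI lessThan_iff)
  qed
  show "(\<lambda>k. (\<rho> ^^ k) x) ` {..<Nn} \<subseteq> orb x" unfolding orb_def by blast
qed

lemma card_orb: "x \<in> X \<Longrightarrow> card (orb x) = Nn"
proof -
  assume x: "x \<in> X"
  have *: "a < Nn \<Longrightarrow> b < Nn \<Longrightarrow> a \<le> b \<Longrightarrow> (\<rho> ^^ a) x = (\<rho> ^^ b) x \<Longrightarrow> a = b" for a b
  proof -
    assume ab: "a < Nn" "b < Nn" "a \<le> b" "(\<rho> ^^ a) x = (\<rho> ^^ b) x"
    hence "Nn dvd b - a" using rho_per[OF x] by simp
    moreover have "b - a < Nn" using ab by linarith
    ultimately have "b - a = 0" by (metis dvd_imp_le neq0_conv not_le)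
    thus "a = b" using ab by simp
  qed
  have "inj_on (\<lambda>k. (\<rho> ^^ k) x) {..<Nn}"
  proof (rule inj_onI)
    fix a b assume "a \<in> {..<Nn}" "b \<in> {..<Nn}" "(\<rho> ^^ a) x = (\<rho> ^^ b) x"
    thus "a = b" using *[of a b] *[of b a] by (cases "a \<le> b") auto
  qed
  thus ?thesis using orb_eq_img[OF x] card_image by (metis card_lessThan)
qed

lemma orb_sub: "x \<in> X \<Longrightarrow> orb x \<subseteq> X" unfolding orb_def using rho_pow_X by blast

lemma orb_self: "x \<in> orb x" unfolding orb_def by (auto intro: exI[of _ 0])

lemma orb_sub2: "y \<in> orb x \<Longrightarrow> orb y \<subseteq> orb x"
proof
  fix z assume "y \<in> orb x" "z \<in> orb y"
  then obtain a k where "y = (\<rho> ^^ a) x" "z = (\<rho> ^^ k) y" unfolding orb_def by blast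
  hence "z = (\<rho> ^^ (k + a)) x" by (simp add: funpow_add)
  thus "z \<in> orb x" unfolding orb_def by blast
qed

lemma orb_eq: "x \<in> X \<Longrightarrow> y \<in> orb x \<Longrightarrow> orb y = orb x"
proof
  assume x: "x \<in> X" and y: "y \<in> orb x"
  show "orb y \<subseteq> orb x" using orb_sub2[OF y] .
  obtain a where a: "y = (\<rho> ^^ a) x" using y unfolding orb_def by blast
  have le: "a \<le> Nn * a" using Nn_pos by simp
  have "(\<rho> ^^ (Nn * a - a)) y = (\<rho> ^^ (Nn * a - a + a)) x" unfolding a by (simp add: funpow_add)
  also have "Nn * a - a + a = Nn * a" using le by simp
  also have "(\<rho> ^^ (Nn * a)) x = (\<rho> ^^ 0) x" using rho_per[OF x, of 0 "Nn * a"] by simp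
  finally have "x \<in> orb y" unfolding orb_def by (metis (mono_tags, lifting) funpow_0 mem_Collect_eq)
  thus "orb x \<subseteq> orb y" by (rule orb_sub2)
qed

lemma num_orbits_X: "card X = card (orb ` X) * Nn"
proof -
  have U: "\<Union>(orb ` X) = X" using orb_sub orb_self by blast
  have disj: "pairwise disjnt (orb ` X)"
  proof (rule pairwiseI)
    fix P1 P2 assume PP: "P1 \<in> orb ` X" "P2 \<in> orb ` X" "P1 \<noteq> P2"
    then obtain x y where xy: "x \<in> X" "y \<in> X" "P1 = orb x" "P2 = orb y" by blast
    show "disjnt P1 P2"
    proof (rule ccontr)
      assume "\<not> disjnt P1 P2"
      then obtain z where "z \<in> orb x" "z \<in> orb y" using xy unfolding disjnt_def by blast
      hence "orb x = orb y" using orb_eq xy by metis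
      thus False using PP xy by simp
    qed
  qed
  have fin: "\<And>P. P \<in> orb ` X \<Longrightarrow> finite P" using finite_X orb_sub finite_subset by blast
  have "card X = sum card (orb ` X)" using card_Union_disjoint[OF disj fin] U by simp
  also have "\<dots> = sum (\<lambda>_. Nn) (orb ` X)" using card_orb by (intro sum.cong) auto
  finally show ?thesis by simp
qed

end



theorem lemma3:
  fixes lam :: "'a::{field,finite}"
    and e :: "'a \<Rightarrow> 'b::{field,finite}"
    and \<zeta> :: 'b
    and q n t l :: nat
    and \<beta> :: "nat \<Rightarrow> nat"
  assumes q_def: "q = card (UNIV :: 'a set)"
    and n_pos: "0 < n"
    and coprime: "coprime n q"
    and lam_nz: "lam \<noteq> 0"
    and t_def: "t = mult_order lam"
    and emb: "is_field_emb e"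
    and zeta_root: "\<zeta> ^ (t * n) = 1"
    and zeta_prim: "\<forall>k. 0 < k \<and> k < t * n \<longrightarrow> \<zeta> ^ k \<noteq> 1"
    and zeta_n: "\<zeta> ^ n = e lam"
    and l_range: "1 \<le> l" "l \<le> s_idx q t n + 1"
    and beta_mono: "\<forall>i j. 1 \<le> i \<and> i < j \<and> j \<le> l \<longrightarrow> \<beta> i < \<beta> j"
    and beta_range: "\<forall>i. 1 \<le> i \<and> i \<le> l \<longrightarrow> \<beta> i \<le> s_idx q t n"
  shows "real (num_orbits (rho n lam)
            {(\<Sum>i=1..l. c i) | c. \<forall>i\<in>{1..l}. c i \<in> irr_code e q t n lam \<zeta> (\<beta> i) - {0}})
         = real ((\<Prod>i=1..l. q ^ d_dim q t n (\<beta> i) - 1)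
                 * Gcd ((\<lambda>i. 1 + t * alpha q t n (\<beta> i)) ` {1..l} \<union> {n}))
           / real (t * n)"
proof -
  interpret cset2 lam e \<zeta> q n t l \<beta>
    by unfold_locales (use assms in auto)
  have Xe: "{(\<Sum>i=1..l. c i) | c. \<forall>i\<in>{1..l}. c i \<in> irr_code e q t n lam \<zeta> (\<beta> i) - {0}} = X"
    by (simp add: X_def)
  have oe: "(\<lambda>x. {(rho n lam ^^ k) x | k. True}) = orb" by (rule ext) (simp add: orb_def)
  have no: "num_orbits (rho n lam) X = card (orb ` X)" unfolding num_orbits_def oe ..
  have "(\<Prod>i=1..l. q ^ d_dim q t n (\<beta> i) - 1) * Gcd ((\<lambda>i. 1 + t * alpha q t n (\<beta> i)) ` {1..l} \<union> {n})
        = card (orb ` X) * (t * n)"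
    unfolding card_X[symmetric] g_def[symmetric] num_orbits_X N_eq by simp
  thus ?thesis unfolding Xe no using N_pos
    by (simp add: field_simps)
qed



end
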